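(* Neither the VCCR $scwc$ nor the VSCC $\overline{scwc}$ satisfies Coherent IIA.
   Context: Profiles: $\mathbf P:V\to\mathcal L(X)$, $V$ nonempty finite set of voters, $X=X(\mathbf P)$ nonempty finite set of candidates, $\mathcal L(X)$ strict linear orders; $\mathbf P_{|Y}$ restricts each ballot to $Y$. $\mathrm{Margin}_{\mathbf P}(x,y)$ = #voters ranking $x$ above $y$ minus #ranking $y$ above $x$. $\mathcal M(\mathbf P)$: directed graph on $X(\mathbf P)$ with edge $x\to y$ of weight $\mathrm{Margin}_{\mathbf P}(x,y)$ when positive. Majority path: sequence with positive consecutive margins; strength = minimum. $(x,y)\in sc(\mathbf P)$ iff $\mathrm{Margin}_{\mathbf P}(x,y)>0$ exceeds the strength of every majority path from $y$ to $x$; $(x,y)\in wc(\mathbf P)$ iff $\mathrm{Margin}_{\mathbf P}(x,y)>0$ and $\mathrm{Margin}_{\mathbf P}(x,z)\ge\mathrm{Margin}_{\mathbf P}(y,z)$ for all $z$; $scwc(\mathbf P)=sc(\mathbf P)\cup wc(\mathbf P)$; $\overline{scwc}(\mathbf P)$ is the set of candidates not defeated in $scwc(\mathbf P)$. Write $\mathbf P\rightsquigarrow_{x,y}\mathbf P'$ if $\mathbf P_{|\{x,y\}}=\mathbf P'_{|\{x,y\}}$ and $\mathcal M(\mathbf P')$ is obtainable from $\mathcal M(\mathbf P)$ by deleting zero or more candidates other than $x,y$ and deleting or reducing weights of zero or more edges not connecting $x$ and $y$. A VCCR $f$ satisfies Coherent IIA if $(x,y)\in f(\mathbf P)$ and $\mathbf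 P\rightsquigarrow_{x,y}\mathbf P'$ imply $(x,y)\in f(\mathbf P')$. A VSCC $F$ satisfies Coherent IIA if for every $\mathbf P$ and $y\notin F(\mathbf P)$ there is $x\in X(\mathbf P)$ with $y\notin F(\mathbf P')$ for all $\mathbf P'$ with $\mathbf P\rightsquigarrow_{x,y}\mathbf P'$. *)

theory Defs
  imports Main
begin

text \<open>A profile records its voter set V, candidate set X and, for each voter, a ballot
given as a strict relation (a, b) meaning "a is ranked above b".\<close>

record profile =
  voters :: "nat set"
  cands  :: "nat set"
  ballot :: "nat \<Rightarrow> (nat \<times> nat) set"

definition wf_profile :: "profile \<Rightarrow> bool" where
  "wf_profile P \<longleftrightarrow> finite (voters P) \<and> voters P \<noteq> {} \<and>
     finite (cands P) \<and> cands P \<noteq> {} \<and>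
     (\<forall>v \<in> voters P. ballot P v \<subseteq> cands P \<times> cands P \<and>
                      strict_linear_order_on (cands P) (ballot P v))"

definition restrict_profile :: "profile \<Rightarrow> nat set \<Rightarrow> profile" where
  "restrict_profile P Y =
     \<lparr>voters = voters P, cands = cands P \<inter> Y,
      ballot = (\<lambda>v. if v \<in> voters P then ballot P v \<inter> (Y \<times> Y) else {})\<rparr>"

definition margin :: "profile \<Rightarrow> nat \<Rightarrow> nat \<Rightarrow> int" where
  "margin P a b = int (card {v \<in> voters P. (a, b) \<in> ballot P v})
                - int (card {v \<in> voters P. (b, a) \<in> ballot P v})"

definition majority_path :: "profile \<Rightarrow> nat list \<Rightarrow> bool" where
  "majority_path P xs \<longleftrightarrow> length xs \<ge> 2 \<and> set xs \<subseteq> cands P \<and>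
     (\<forall>i. Suc i < length xs \<longrightarrow> margin P (xs ! i) (xs ! Suc i) > 0)"

definition path_strength :: "profile \<Rightarrow> nat list \<Rightarrow> int" where
  "path_strength P xs = Min {margin P (xs ! i) (xs ! Suc i) | i. Suc i < length xs}"

definition sc :: "profile \<Rightarrow> (nat \<times> nat) set" where
  "sc P = {(x, y). x \<in> cands P \<and> y \<in> cands P \<and> margin P x y > 0 \<and>
     (\<forall>xs. majority_path P xs \<and> hd xs = y \<and> last xs = x \<longrightarrow>
            margin P x y > path_strength P xs)}"

definition wc :: "profile \<Rightarrow> (nat \<times> nat) set" where
  "wc P = {(x, y). x \<in> cands P \<and> y \<in> cands P \<and> margin P x y > 0 \<and>
     (\<forall>z \<in> cands P. margin P x z \<ge> margin P y z)}"

definition scwc :: "profile \<Rightarrow> (nat \<times> nat) set" where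
  "scwc P = sc P \<union> wc P"

definition scwc_bar :: "profile \<Rightarrow> nat set" where
  "scwc_bar P = {x \<in> cands P. \<not> (\<exists>y. (y, x) \<in> scwc P)}"

text \<open>M(P') is obtained from M(P) by deleting candidates other than x, y and
deleting / reducing the weight of edges not connecting x and y.\<close>
definition graph_reduct :: "profile \<Rightarrow> nat \<Rightarrow> nat \<Rightarrow> profile \<Rightarrow> bool" where
  "graph_reduct P x y P' \<longleftrightarrow>
     cands P' \<subseteq> cands P \<and>
     (\<forall>c \<in> cands P. c \<notin> cands P' \<longrightarrow> c \<noteq> x \<and> c \<noteq> y) \<and>
     (\<forall>a \<in> cands P'. \<forall>b \<in> cands P'.
        (margin P' a b > 0 \<longrightarrow> margin P a b > 0 \<and> margin P' a b \<le> margin P a b) \<and>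
        ({a, b} = {x, y} \<longrightarrow>
           (margin P' a b > 0 \<longleftrightarrow> margin P a b > 0) \<and>
           (margin P a b > 0 \<longrightarrow> margin P' a b = margin P a b)))"

definition squig :: "profile \<Rightarrow> nat \<Rightarrow> nat \<Rightarrow> profile \<Rightarrow> bool" where
  "squig P x y P' \<longleftrightarrow>
     restrict_profile P {x, y} = restrict_profile P' {x, y} \<and> graph_reduct P x y P'"

definition coherent_IIA_vccr :: "(profile \<Rightarrow> (nat \<times> nat) set) \<Rightarrow> bool" where
  "coherent_IIA_vccr f \<longleftrightarrow>
     (\<forall>P P' x y. wf_profile P \<and> wf_profile P' \<and> (x, y) \<in> f P \<and> squig P x y P'
                 \<longrightarrow> (x, y) \<in> f P')"

definition coherent_IIA_vscc :: "(profile \<Rightarrow> nat set) \<Rightarrow> bool" where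
  "coherent_IIA_vscc F \<longleftrightarrow>
     (\<forall>P y. wf_profile P \<and> y \<notin> F P \<longrightarrow>
        (\<exists>x \<in> cands P. \<forall>P'. wf_profile P' \<and> squig P x y P' \<longrightarrow> y \<notin> F P'))"

end

theory Submission
  imports Defs
begin

definition mkP :: "nat set \<Rightarrow> (nat \<Rightarrow> nat \<Rightarrow> nat) \<Rightarrow> profile" where
  "mkP C R = \<lparr>voters = {0,1,2,3,4}, cands = C,
     ballot = (\<lambda>v. {(a,b). a \<in> C \<and> b \<in> C \<and> R v a < R v b})\<rparr>"

lemma slo_rank:
  fixes f :: "nat \<Rightarrow> nat"
  assumes "inj_on f C"
  shows "strict_linear_order_on C {(a,b). a \<in> C \<and> b \<in> C \<and> f a < f b}"
  unfolding strict_linear_order_on_def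
proof (intro conjI)
  show "trans {(a,b). a \<in> C \<and> b \<in> C \<and> f a < f b}"
    by (rule transI) auto
  show "irrefl {(a,b). a \<in> C \<and> b \<in> C \<and> f a < f b}"
    by (auto simp: irrefl_on_def)
  show "total_on C {(a,b). a \<in> C \<and> b \<in> C \<and> f a < f b}"
  proof (rule total_onI)
    fix a b assume ab: "a \<in> C" "b \<in> C" "a \<noteq> b"
    then have "f a \<noteq> f b" using assms by (auto simp: inj_on_def)
    then show "(a, b) \<in> {(a,b). a \<in> C \<and> b \<in> C \<and> f a < f b} \<or> (b, a) \<in> {(a,b). a \<in> C \<and> b \<in> C \<and> f a < f b}"
      using ab by auto
  qed
qed

lemma wf_mk:
  assumes "finite C" "C \<noteq> {}" "\<And>v. v \<in> {0,1,2,3,4} \<Longrightarrow> inj_on (R v) C"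
  shows "wf_profile (mkP C R)"
  unfolding wf_profile_def
proof (intro conjI ballI)
  fix v assume v: "v \<in> voters (mkP C R)"
  then have v': "v \<in> {0,1,2,3,4}" by (simp add: mkP_def)
  show "ballot (mkP C R) v \<subseteq> cands (mkP C R) \<times> cands (mkP C R)"
    by (auto simp: mkP_def)
  show "strict_linear_order_on (cands (mkP C R)) (ballot (mkP C R) v)"
    using slo_rank[OF assms(3)[OF v']] by (simp add: mkP_def)
qed (use assms in \<open>auto simp: mkP_def\<close>)

lemma card_filter_sum: "finite V \<Longrightarrow> card {v \<in> V. Q v} = (\<Sum>v\<in>V. if Q v then 1 else 0)"
  by (simp add: sum.If_cases Int_def)

lemma margin_mk:
  "margin (mkP C R) a b =
     int (\<Sum>v\<in>{0,1,2,3,4}. if a \<in> C \<and> b \<in> C \<and> R v a < R v b then 1 else 0)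
   - int (\<Sum>v\<in>{0,1,2,3,4}. if b \<in> C \<and> a \<in> C \<and> R v b < R v a then 1 else 0)"
  unfolding margin_def mkP_def
  by (simp only: profile.simps mem_Collect_eq case_prod_conv card_filter_sum[OF finite.insertI[OF finite.insertI[OF finite.insertI[OF finite.insertI[OF finite.insertI[OF finite.emptyI]]]]]])

definition LP :: "nat list list" where
  "LP = [[0,1,2,3],[0,1,2,3],[2,3,0,1],[2,1,3,0],[2,1,3,0]]"
definition LQ :: "nat list list" where
  "LQ = [[0,1,2,3],[0,1,2,3],[2,3,0,1],[2,1,3,0],[3,1,2,0]]"

definition P0 where "P0 = mkP {0,1,2,3} (\<lambda>v a. LP ! v ! a)"
definition Q0 where "Q0 = mkP {0,1,2,3} (\<lambda>v a. LQ ! v ! a)"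

lemma wfP: "wf_profile P0"
  unfolding P0_def by (rule wf_mk) (auto simp: LP_def inj_on_def)
lemma wfQ: "wf_profile Q0"
  unfolding Q0_def by (rule wf_mk) (auto simp: LQ_def inj_on_def)

lemma candsP[simp]: "cands P0 = {0,1,2,3}" by (simp add: P0_def mkP_def)
lemma candsQ[simp]: "cands Q0 = {0,1,2,3}" by (simp add: Q0_def mkP_def)

lemma mP[simp]: "margin P0 0 0 = 0" "margin P0 0 1 = 1" "margin P0 0 2 = 3" "margin P0 0 3 = -1" "margin P0 1 0 = -1" "margin P0 1 1 = 0" "margin P0 1 2 = 3" "margin P0 1 3 = -1" "margin P0 2 0 = -3" "margin P0 2 1 = -3" "margin P0 2 2 = 0" "margin P0 2 3 = 1" "margin P0 3 0 = 1" "margin P0 3 1 = 1" "margin P0 3 2 = -1" "margin P0 3 3 = 0"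
  by (simp_all add: P0_def margin_mk LP_def)

lemma mQ[simp]: "margin Q0 0 0 = 0" "margin Q0 0 1 = 1" "margin Q0 0 2 = 1" "margin Q0 0 3 = -1" "margin Q0 1 0 = -1" "margin Q0 1 1 = 0" "margin Q0 1 2 = 3" "margin Q0 1 3 = -1" "margin Q0 2 0 = -1" "margin Q0 2 1 = -3" "margin Q0 2 2 = 0" "margin Q0 2 3 = 1" "margin Q0 3 0 = 1" "margin Q0 3 1 = 1" "margin Q0 3 2 = -1" "margin Q0 3 3 = 0"
  by (simp_all add: Q0_def margin_mk LQ_def)

lemma mP'[simp]: "margin P0 0 (Suc 0) = 1" "margin P0 (Suc 0) 0 = -1" "margin P0 (Suc 0) (Suc 0) = 0" "margin P0 (Suc 0) 2 = 3" "margin P0 (Suc 0) 3 = -1" "margin P0 2 (Suc 0) = -3" "margin P0 3 (Suc 0) = 1"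
  using mP by simp_all

lemma mQ'[simp]: "margin Q0 0 (Suc 0) = 1" "margin Q0 (Suc 0) 0 = -1" "margin Q0 (Suc 0) (Suc 0) = 0" "margin Q0 (Suc 0) 2 = 3" "margin Q0 (Suc 0) 3 = -1" "margin Q0 2 (Suc 0) = -3" "margin Q0 3 (Suc 0) = 1"
  using mQ by simp_all

lemma restrict_mk:
  assumes "\<And>v a b. v \<in> {0,1,2,3,4} \<Longrightarrow> a \<in> C \<inter> Y \<Longrightarrow> b \<in> C \<inter> Y \<Longrightarrow> (R v a < R v b) = (R' v a < R' v b)"
  shows "restrict_profile (mkP C R) Y = restrict_profile (mkP C R') Y"
proof -
  have "(\<lambda>v. if v \<in> {0,1,2,3,4} then {(a,b). a \<in> C \<and> b \<in> C \<and> R v a < R v b} \<inter> (Y \<times> Y) else {})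
      = (\<lambda>v. if v \<in> {0,1,2,3,4} then {(a,b). a \<in> C \<and> b \<in> C \<and> R' v a < R' v b} \<inter> (Y \<times> Y) else {})"
  proof
    fix v show "(if v \<in> {0,1,2,3,4} then {(a,b). a \<in> C \<and> b \<in> C \<and> R v a < R v b} \<inter> (Y \<times> Y) else {})
      = (if v \<in> {0,1,2,3,4} then {(a,b). a \<in> C \<and> b \<in> C \<and> R' v a < R' v b} \<inter> (Y \<times> Y) else {})"
    proof (cases "v \<in> {0,1,2,3,4}")
      case True
      have "{(a,b). a \<in> C \<and> b \<in> C \<and> R v a < R v b} \<inter> (Y \<times> Y) = {(a,b). a \<in> C \<and> b \<in> C \<and> R' v a < R' v b} \<inter> (Y \<times> Y)"
        using assms[OF True] by blast
      then show ?thesis by (simp only: if_True True)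
    qed simp
  qed
  then show ?thesis unfolding restrict_profile_def mkP_def profile.simps by (simp only: profile.ext_inject)
qed

lemma set3: "{f i |i. Suc i < length [a,b,c::nat]} = {f 0, f 1}"
proof (rule set_eqI, rule iffI)
  fix x assume "x \<in> {f i |i. Suc i < length [a,b,c]}"
  then obtain i where "x = f i" "i < 2" by auto
  then show "x \<in> {f 0, f 1}" by (auto simp: less_Suc_eq numeral_2_eq_2)
next
  fix x assume "x \<in> {f 0, f 1}"
  then show "x \<in> {f i |i. Suc i < length [a,b,c]}" by auto
qed
lemma set4: "{f i |i. Suc i < length [a,b,c,d::nat]} = {f 0, f 1, f 2}"
proof (rule set_eqI, rule iffI)
  fix x assume "x \<in> {f i |i. Suc i < length [a,b,c,d]}"
  then obtain i where "x = f i" "i < 3" by auto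
  then show "x \<in> {f 0, f 1, f 2}" by (auto simp: less_Suc_eq numeral_3_eq_3 numeral_2_eq_2)
next
  fix x assume "x \<in> {f 0, f 1, f 2}"
  then show "x \<in> {f i |i. Suc i < length [a,b,c,d]}" by fastforce
qed

lemma ps3: "path_strength P [a,b,c] = min (margin P a b) (margin P b c)"
  unfolding path_strength_def set3 by simp
lemma ps4: "path_strength P [a,b,c,d] = min (margin P a b) (min (margin P b c) (margin P c d))"
  unfolding path_strength_def set4 by simp

lemma mp3: "majority_path P [a,b,c] \<longleftrightarrow> {a,b,c} \<subseteq> cands P \<and> margin P a b > 0 \<and> margin P b c > 0"
  unfolding majority_path_def by (auto simp: less_Suc_eq)
lemma mp4: "majority_path P [a,b,c,d] \<longleftrightarrow> {a,b,c,d} \<subseteq> cands P \<and> margin P a b > 0 \<and> margin P b c > 0 \<and> margin P c d > 0"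
  unfolding majority_path_def by (auto simp: less_Suc_eq)

lemma not_sc:
  assumes "majority_path P xs" "hd xs = y" "last xs = x" "margin P x y \<le> path_strength P xs"
  shows "(x, y) \<notin> sc P"
  using assms unfolding sc_def by force

lemma wc01: "(0,1) \<in> wc P0"
  unfolding wc_def by simp

lemma rk_same:
  assumes "v \<in> {0,1,2,3,4}" "a \<in> {0,1,2,3}" "b \<in> {0,1,2,3}" "\<not> (a = 0 \<and> b = 2)" "\<not> (a = 2 \<and> b = 0)"
  shows "(LP ! v ! a < LP ! v ! b) = (LQ ! v ! a < LQ ! v ! b)"
  using assms by (auto simp: LP_def LQ_def)

lemma m_same:
  assumes "a \<in> {0,1,2,3}" "b \<in> {0,1,2,3}" "\<not> (a = 0 \<and> b = 2)" "\<not> (a = 2 \<and> b = 0)"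
  shows "margin Q0 a b = margin P0 a b"
  using assms by auto

lemma m_dom:
  assumes "a \<in> {0,1,2,3}" "b \<in> {0,1,2,3}" "margin Q0 a b > 0"
  shows "margin P0 a b > 0 \<and> margin Q0 a b \<le> margin P0 a b"
  using assms by auto

lemma sq: "x \<in> {0,1,2,3} \<Longrightarrow> squig P0 x 1 Q0"
  unfolding squig_def
proof
  assume x: "x \<in> {0,1,2,3}"
  show "restrict_profile P0 {x, 1} = restrict_profile Q0 {x, 1}"
    unfolding P0_def Q0_def
  proof (rule restrict_mk)
    fix v a b :: nat assume v: "v \<in> {0,1,2,3,4}" and a: "a \<in> {0,1,2,3} \<inter> {x,1}" and b: "b \<in> {0,1,2,3} \<inter> {x,1}"
    have a': "a \<in> {0,1,2,3}" and b': "b \<in> {0,1,2,3}" using a b by simp_all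
    have "a = 1 \<or> b = 1 \<or> a = b" using IntD2[OF a] IntD2[OF b] by auto
    then have "\<not> (a = 0 \<and> b = 2)" "\<not> (a = 2 \<and> b = 0)" by auto
    then show "(LP ! v ! a < LP ! v ! b) = (LQ ! v ! a < LQ ! v ! b)"
      using rk_same[OF v a' b'] by simp
  qed
  show "graph_reduct P0 x 1 Q0"
    unfolding graph_reduct_def
  proof (intro conjI ballI)
    fix a b assume a: "a \<in> cands Q0" and b: "b \<in> cands Q0"
    have a': "a \<in> {0,1,2,3}" and b': "b \<in> {0,1,2,3}" using a b by simp_all
    show "0 < margin Q0 a b \<longrightarrow> 0 < margin P0 a b \<and> margin Q0 a b \<le> margin P0 a b"
      using m_dom[OF a' b'] by blast
    show "{a, b} = {x, 1} \<longrightarrow>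
           (0 < margin Q0 a b) = (0 < margin P0 a b) \<and>
           (0 < margin P0 a b \<longrightarrow> margin Q0 a b = margin P0 a b)"
    proof
      assume eq: "{a, b} = {x, 1}"
      have "1 \<in> {a, b}" using eq by blast
      then have "a = 1 \<or> b = 1" by blast
      then have "\<not> (a = 0 \<and> b = 2)" "\<not> (a = 2 \<and> b = 0)" by auto
      then have "margin Q0 a b = margin P0 a b" using m_same[OF a' b'] by blast
      then show "(0 < margin Q0 a b) = (0 < margin P0 a b) \<and>
           (0 < margin P0 a b \<longrightarrow> margin Q0 a b = margin P0 a b)"
        by simp
    qed
  qed simp_all
qed

lemma Q01: "(0,1) \<notin> scwc Q0"
proof -
  have "(0,1) \<notin> wc Q0" unfolding wc_def by force
  moreover have "(0,1) \<notin> sc Q0"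
    by (rule not_sc[of _ "[1,2,3,0]"]) (simp_all add: mp4 ps4)
  ultimately show ?thesis by (simp add: scwc_def)
qed

lemma Q31: "(3,1) \<notin> scwc Q0"
proof -
  have "(3,1) \<notin> wc Q0" unfolding wc_def by force
  moreover have "(3,1) \<notin> sc Q0"
    by (rule not_sc[of _ "[1,2,3]"]) (simp_all add: mp3 ps3)
  ultimately show ?thesis by (simp add: scwc_def)
qed

lemma Q_bar: "1 \<in> scwc_bar Q0"
proof -
  have "(z,1) \<notin> scwc Q0" for z
  proof -
    consider "z = 0" | "z = 3" | "z = 1" | "z = 2" | "z \<notin> {0,1,2,3}" by auto
    then show ?thesis
    proof cases
      case 1 then show ?thesis using Q01 by simp
    next
      case 2 then show ?thesis using Q31 by simp
    qed (auto simp: scwc_def sc_def wc_def)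
  qed
  then show ?thesis unfolding scwc_bar_def by simp
qed

theorem proposition8p4:
  shows "\<not> coherent_IIA_vccr scwc \<and> \<not> coherent_IIA_vscc scwc_bar"
proof
  show "\<not> coherent_IIA_vccr scwc"
    unfolding coherent_IIA_vccr_def
    using wfP wfQ wc01 sq[of 0] Q01 by (auto simp: scwc_def)
  show "\<not> coherent_IIA_vscc scwc_bar"
    unfolding coherent_IIA_vscc_def
  proof (intro notI)
    assume h: "\<forall>P y. wf_profile P \<and> y \<notin> scwc_bar P \<longrightarrow>
        (\<exists>x\<in>cands P. \<forall>P'. wf_profile P' \<and> squig P x y P' \<longrightarrow> y \<notin> scwc_bar P')"
    have "1 \<notin> scwc_bar P0" using wc01 by (auto simp: scwc_bar_def scwc_def)
    then obtain x where "x \<in> cands P0" "\<forall>P'. wf_profile P' \<and> squig P0 x 1 P' \<longrightarrow> 1 \<notin> scwc_bar P'"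
      using h wfP by blast
    then show False using wfQ sq Q_bar by auto
  qed
qed

end
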